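(* Let $n\ge 3$ and $m\ge 2$, let $K_n$ be the complete graph on $n$ vertices and $C_{2m}$ the cycle graph on $2m$ vertices. Then the set of distinct distance eigenvalues (eigenvalues of the distance matrix) of $K_n\otimes C_{2m}$ consists of the numbers $2(n+1)+nm^2$; $2(n-1)+4\cos\left(\frac{2p\pi}{m}\right)$ for $p=1,2,\ldots,m-1$; $2(n-1)+4\cos\left(\frac{(2q-1)\pi}{m}\right)-n\,\mathrm{cosec}^{2}\left(\frac{(2q-1)\pi}{2m}\right)$ for $q=1,2,\ldots,m$; $4\cos\left(\frac{\pi}{m}r\right)-2$ for $r=0,1,\ldots,2m-1$.
   Context: The Kronecker product $G\otimes H$ of simple graphs $G,H$ has vertex set $V(G)\times V(H)$, with $(x,y)$ adjacent to $(u,v)$ if and only if $xu\in E(G)$ and $yv\in E(H)$. The distance matrix of a connected graph has $(u,v)$ entry equal to the length of a shortest $u$–$v$ path. *)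

theory Defs
  imports Complex_Main
begin

text \<open>Simple graphs are given by a finite vertex set together with a symmetric,
irreflexive adjacency relation.\<close>

definition complete_adj :: "nat \<Rightarrow> nat \<Rightarrow> nat \<Rightarrow> bool" where
  "complete_adj n i j \<longleftrightarrow> i < n \<and> j < n \<and> i \<noteq> j"

definition cycle_adj :: "nat \<Rightarrow> nat \<Rightarrow> nat \<Rightarrow> bool" where
  "cycle_adj N i j \<longleftrightarrow> i < N \<and> j < N \<and> (j = (i + 1) mod N \<or> i = (j + 1) mod N)"

definition kron_adj :: "('a \<Rightarrow> 'a \<Rightarrow> bool) \<Rightarrow> ('b \<Rightarrow> 'b \<Rightarrow> bool)
    \<Rightarrow> 'a \<times> 'b \<Rightarrow> 'a \<times> 'b \<Rightarrow> bool" where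
  "kron_adj G H p q \<longleftrightarrow> G (fst p) (fst q) \<and> H (snd p) (snd q)"

fun walk_of_len :: "('a \<Rightarrow> 'a \<Rightarrow> bool) \<Rightarrow> nat \<Rightarrow> 'a \<Rightarrow> 'a \<Rightarrow> bool" where
  "walk_of_len E 0 u v \<longleftrightarrow> u = v"
| "walk_of_len E (Suc k) u v \<longleftrightarrow> (\<exists>w. E u w \<and> walk_of_len E k w v)"

definition graph_dist :: "('a \<Rightarrow> 'a \<Rightarrow> bool) \<Rightarrow> 'a \<Rightarrow> 'a \<Rightarrow> nat" where
  "graph_dist E u v = (LEAST k. walk_of_len E k u v)"

text \<open>Distance eigenvalue: eigenvalue of the distance matrix indexed by V.
The distance matrix is real symmetric, so all its eigenvalues are real.\<close>
definition distance_eigenvalue :: "'a set \<Rightarrow> ('a \<Rightarrow> 'a \<Rightarrow> bool) \<Rightarrow> real \<Rightarrow> bool" where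
  "distance_eigenvalue V E \<mu> \<longleftrightarrow>
     (\<exists>x :: 'a \<Rightarrow> real. (\<exists>v\<in>V. x v \<noteq> 0) \<and>
        (\<forall>u\<in>V. (\<Sum>v\<in>V. real (graph_dist E u v) * x v) = \<mu> * x u))"

end

theory Submission
  imports Defs
begin

lemma walk_kron:
  "walk_of_len (kron_adj G H) k (a,b) (c,d) \<longleftrightarrow> walk_of_len G k a c \<and> walk_of_len H k b d"
proof (induction k arbitrary: a b)
  case 0 then show ?case by auto
next
  case (Suc k) then show ?case by (auto simp: kron_adj_def)
qed

lemma walk_complete:
  assumes "n \<ge> 3" "i < n" "i' < n"
  shows "walk_of_len (complete_adj n) k i i' \<longleftrightarrow> (if i = i' then k \<noteq> 1 else k \<ge> 1)"
  using assms(2)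
proof (induction k arbitrary: i)
  case 0 then show ?case by auto
next
  case (Suc k)
  show ?case
  proof (cases k)
    case 0 then show ?thesis using Suc.prems assms by (auto simp: complete_adj_def)
  next
    case (Suc k')
    have "\<exists>w. complete_adj n i w \<and> walk_of_len (complete_adj n) k w i'"
    proof (cases "k = 1")
      case True
      obtain w where "w < n" "w \<noteq> i" "w \<noteq> i'"
      proof -
        have "finite {i,i'}" by simp
        then have "card {i,i'} \<le> 2" by (simp add: card_insert_if)
        then have "\<not> {..<n} \<subseteq> {i,i'}" using assms(1)
          by (metis card_lessThan card_mono finite.emptyI finite_insert le_trans not_less_eq_eq numeral_2_eq_2 numeral_3_eq_3)
        then obtain w where "w \<in> {..<n}" "w \<notin> {i,i'}" by blast
        then show ?thesis using that by auto
      qed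
      moreover have "walk_of_len (complete_adj n) k w i'" using Suc.IH[of w] True \<open>w < n\<close> \<open>w \<noteq> i'\<close> by simp
      ultimately show ?thesis using Suc.prems unfolding complete_adj_def by blast
    next
      case False
      obtain w where "w < n" "w \<noteq> i"
        using assms by (metis Suc_lessI le_eq_less_or_eq less_not_refl2 numeral_3_eq_3 less_Suc_eq)
      moreover have "walk_of_len (complete_adj n) k w i'" using Suc.IH[of w] False \<open>w < n\<close> \<open>k = Suc k'\<close> by simp
      ultimately show ?thesis using Suc.prems unfolding complete_adj_def by blast
    qed
    then show ?thesis using Suc by auto
  qed
qed


definition ddi :: "nat \<Rightarrow> int \<Rightarrow> int" where
  "ddi N t = min (t mod int N) (int N - t mod int N)"

lemma ddi_range: "N > 0 \<Longrightarrow> 0 \<le> ddi N t \<and> ddi N t \<le> t mod int N \<and> ddi N t \<le> int N - t mod int N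
   \<and> (ddi N t = t mod int N \<or> ddi N t = int N - t mod int N)"
proof -
  assume "N > 0"
  then have "0 \<le> t mod int N" "t mod int N < int N" by auto
  then show ?thesis unfolding ddi_def by linarith
qed

lemma cycle_adj_iff:
  assumes "j < N" "w < N"
  shows "cycle_adj N j w \<longleftrightarrow> int w = (int j + 1) mod int N \<or> int w = (int j - 1) mod int N"
proof -
  have 1: "(w = (j+1) mod N) \<longleftrightarrow> int w = (int j + 1) mod int N"
    by (metis of_nat_1 of_nat_add of_nat_eq_iff zmod_int)
  have 2: "(j = (w+1) mod N) \<longleftrightarrow> int w = (int j - 1) mod int N"
  proof (cases "w + 1 < N")
    case True
    then show ?thesis using assms
      by (cases "j = 0") (auto simp: mod_pos_pos_trivial zmod_minus1)
  next
    case False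
    then have "w + 1 = N" using assms by simp
    then show ?thesis using assms
      by (cases "j = 0") (auto simp: mod_pos_pos_trivial zmod_minus1)
  qed
  show ?thesis using assms 1 2 by (auto simp: cycle_adj_def)
qed


lemma walk_cycle:
  assumes "j < N" "j' < N"
  shows "walk_of_len (cycle_adj N) k j j' \<longleftrightarrow>
    (\<exists>s::int. \<bar>s\<bar> \<le> int k \<and> even (int k - s) \<and> (int j + s) mod int N = int j')"
  using assms(1)
proof (induction k arbitrary: j)
  case 0
  then show ?case using assms by (auto simp: mod_pos_pos_trivial)
next
  case (Suc k)
  have N: "N > 0" using assms by simp
  let ?P = "\<lambda>k j. (\<exists>s::int. \<bar>s\<bar> \<le> int k \<and> even (int k - s) \<and> (int j + s) mod int N = int j')"
  have "walk_of_len (cycle_adj N) (Suc k) j j' \<longleftrightarrow> (\<exists>w. cycle_adj N j w \<and> walk_of_len (cycle_adj N) k w j')"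
    by (simp only: walk_of_len.simps)
  also have "\<dots> \<longleftrightarrow> (\<exists>w. cycle_adj N j w \<and> ?P k w)"
  proof -
    have "\<And>w. cycle_adj N j w \<Longrightarrow> walk_of_len (cycle_adj N) k w j' \<longleftrightarrow> ?P k w"
      using Suc.IH unfolding cycle_adj_def by blast
    then show ?thesis by blast
  qed
  also have "\<dots> \<longleftrightarrow> ?P (Suc k) j"
  proof
    assume "\<exists>w. cycle_adj N j w \<and> ?P k w"
    then obtain w s where w: "cycle_adj N j w" and s: "\<bar>s\<bar> \<le> int k" "even (int k - s)"
      "(int w + s) mod int N = int j'" by blast
    have wN: "w < N" using w by (simp add: cycle_adj_def)
    from w consider "int w = (int j + 1) mod int N" | "int w = (int j - 1) mod int N"
      using cycle_adj_iff[OF Suc.prems wN] by blast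
    then show "?P (Suc k) j"
    proof cases
      case 1
      have "(int j + (s + 1)) mod int N = int j'"
        using s(3) unfolding 1 by (metis add.assoc add.commute mod_add_left_eq)
      then show ?thesis using s by (intro exI[of _ "s+1"]) auto
    next
      case 2
      have "(int j + (s - 1)) mod int N = int j'"
        using s(3) unfolding 2 by (metis add.commute add_diff_eq diff_add_eq mod_add_left_eq)
      then show ?thesis using s by (intro exI[of _ "s-1"]) auto
    qed
  next
    assume "?P (Suc k) j"
    then obtain s where s: "\<bar>s\<bar> \<le> int (Suc k)" "even (int (Suc k) - s)"
      "(int j + s) mod int N = int j'" by blast
    define wp where "wp = nat ((int j + 1) mod int N)"
    define wm where "wm = nat ((int j - 1) mod int N)"
    have wp: "int wp = (int j + 1) mod int N" "wp < N" using N by (auto simp: wp_def nat_less_iff)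
    have wm: "int wm = (int j - 1) mod int N" "wm < N" using N by (auto simp: wm_def nat_less_iff)
    have ap: "cycle_adj N j wp" using cycle_adj_iff[OF Suc.prems wp(2)] wp by simp
    have am: "cycle_adj N j wm" using cycle_adj_iff[OF Suc.prems wm(2)] wm by simp
    show "\<exists>w. cycle_adj N j w \<and> ?P k w"
    proof (cases "s \<ge> 1 \<or> s = 0")
      case True
      have "(int wp + (s - 1)) mod int N = int j'"
        using s(3) unfolding wp(1) by (metis add.commute add_diff_eq diff_add_eq mod_add_left_eq diff_add_cancel)
      then show ?thesis using ap s True by (intro exI[of _ wp]) (auto intro!: exI[of _ "s - 1"] simp: Suc_le_eq odd_pos)
    next
      case False
      have "(int wm + (s + 1)) mod int N = int j'"
        using s(3) unfolding wm(1) by (metis add.commute add_diff_eq diff_add_eq mod_add_left_eq diff_add_cancel)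
      then show ?thesis using am s False by (intro exI[of _ wm]) (auto intro!: exI[of _ "s + 1"])
    qed
  qed
  finally show ?case .
qed


lemma cyc_ddi:
  assumes "even N" "N > 0" "j' < N"
  shows "(\<exists>s::int. \<bar>s\<bar> \<le> int k \<and> even (int k - s) \<and> (int j + s) mod int N = int j')
     \<longleftrightarrow> ddi N (int j' - int j) \<le> int k \<and> even (int k - ddi N (int j' - int j))"
proof -
  define t where "t = (int j' - int j) mod int N"
  have t: "0 \<le> t" "t < int N" using assms by (auto simp: t_def)
  have eq: "(int j + s) mod int N = int j' \<longleftrightarrow> s mod int N = t" for s
  proof -
    have "int j' = int j' mod int N" using assms by simp
    then have "(int j + s) mod int N = int j' \<longleftrightarrow> (int j + s) mod int N = int j' mod int N" by simp
    also have "\<dots> \<longleftrightarrow> int N dvd (int j + s) - int j'" by (rule mod_eq_dvd_iff)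
    also have "\<dots> \<longleftrightarrow> int N dvd s - (int j' - int j)" by (simp add: algebra_simps)
    also have "\<dots> \<longleftrightarrow> s mod int N = t" unfolding t_def by (rule mod_eq_dvd_iff[symmetric])
    finally show ?thesis .
  qed
  have dd: "0 \<le> ddi N (int j' - int j)" "ddi N (int j' - int j) \<le> t" "ddi N (int j' - int j) \<le> int N - t"
      "ddi N (int j' - int j) = t \<or> ddi N (int j' - int j) = int N - t"
    using ddi_range[OF assms(2), of "int j' - int j"] unfolding t_def by auto
  have evN: "even (int N)" using assms by simp
  show ?thesis
  proof
    assume "\<exists>s. \<bar>s\<bar> \<le> int k \<and> even (int k - s) \<and> (int j + s) mod int N = int j'"
    then obtain s where s: "\<bar>s\<bar> \<le> int k" "even (int k - s)" "s mod int N = t" using eq by blast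
    define c where "c = s div int N"
    have sc: "s = t + int N * c" using s(3) unfolding c_def by (metis div_mult_mod_eq add.commute mult.commute)
    have par: "even (s - t)" using sc evN by simp
    have ge: "\<bar>s\<bar> \<ge> ddi N (int j' - int j)"
    proof (cases "c \<ge> 0")
      case True
      then have "int N * c \<ge> 0" by simp
      then show ?thesis using sc dd t by linarith
    next
      case False
      then have "int N * c \<le> int N * (-1)" by (intro mult_left_mono) auto
      then show ?thesis using sc dd t by linarith
    qed
    have "even (int k - ddi N (int j' - int j))"
      using dd(4) par s(2) evN
      by presburger
    then show "ddi N (int j' - int j) \<le> int k \<and> even (int k - ddi N (int j' - int j))"
      using ge s(1) by linarith
  next
    assume H: "ddi N (int j' - int j) \<le> int k \<and> even (int k - ddi N (int j' - int j))"
    show "\<exists>s. \<bar>s\<bar> \<le> int k \<and> even (int k - s) \<and> (int j + s) mod int N = int j'"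
    proof (cases "ddi N (int j' - int j) = t")
      case True
      then show ?thesis using H t eq[of t] by (intro exI[of _ t]) auto
    next
      case False
      then have d: "ddi N (int j' - int j) = int N - t" using dd by auto
      have "(t - int N) mod int N = t" using t by simp
      moreover have "even (int k - (t - int N))" using H d evN
        by presburger
      ultimately show ?thesis using H t d eq[of "t - int N"] by (intro exI[of _ "t - int N"]) auto
    qed
  qed
qed

lemma dst_least:
  fixes d :: int and b :: bool and y :: nat
  assumes "d \<ge> 0"
  defines "D \<equiv> nat d + (if b then (if nat d = 1 then 2 else 0) else (if nat d = 0 then 2 else 0))"
  shows "(if b then D \<noteq> 1 else D \<ge> 1) \<and> d \<le> int D \<and> even (int D - d)"
    and "(if b then y \<noteq> 1 else y \<ge> 1) \<and> d \<le> int y \<and> even (int y - d) \<Longrightarrow> D \<le> y"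
proof -
  consider "d = 0" | "d = 1" | "d \<ge> 2" using assms by linarith
  then show "(if b then D \<noteq> 1 else D \<ge> 1) \<and> d \<le> int D \<and> even (int D - d)"
    by cases (auto simp: D_def)
next
  assume H: "(if b then y \<noteq> 1 else y \<ge> 1) \<and> d \<le> int y \<and> even (int y - d)"
  consider "d = 0" | "d = 1" | "d \<ge> 2" using assms by linarith
  then show "D \<le> y"
  proof cases
    case 1
    then have "even y" using H by simp
    moreover have "\<not> b \<Longrightarrow> y \<noteq> 0" using H by auto
    moreover have "y \<noteq> 1" using \<open>even y\<close> by auto
    ultimately have "\<not> b \<Longrightarrow> y \<ge> 2" by linarith
    then show ?thesis using 1 by (auto simp: D_def)
  next
    case 2
    then have "odd y" using H by simp
    then have "y \<noteq> 0" "y \<noteq> 2" by (auto intro: odd_pos)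
    then have "b \<Longrightarrow> y \<ge> 3" using H by auto
    then show ?thesis using 2 H by (auto simp: D_def)
  next
    case 3 then show ?thesis using H by (auto simp: D_def nat_le_iff)
  qed
qed

definition Dst :: "nat \<Rightarrow> nat \<Rightarrow> nat \<Rightarrow> int \<Rightarrow> nat" where
  "Dst N i i' t = (let d = nat (ddi N t) in
      d + (if i = i' then (if d = 1 then 2 else 0) else (if d = 0 then 2 else 0)))"

lemma graph_dist_kron:
  assumes "n \<ge> 3" "even N" "N > 0" "i < n" "i' < n" "j < N" "j' < N"
  shows "graph_dist (kron_adj (complete_adj n) (cycle_adj N)) (i,j) (i',j') = Dst N i i' (int j' - int j)"
proof -
  define d where "d = ddi N (int j' - int j)"
  have d0: "d \<ge> 0" using ddi_range[OF assms(3)] by (simp add: d_def)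
  have W: "walk_of_len (kron_adj (complete_adj n) (cycle_adj N)) k (i,j) (i',j') \<longleftrightarrow>
        (if i = i' then k \<noteq> 1 else k \<ge> 1) \<and> d \<le> int k \<and> even (int k - d)" for k
    unfolding walk_kron walk_complete[OF assms(1,4,5)] walk_cycle[OF assms(6,7)]
      cyc_ddi[OF assms(2,3,7)] d_def by simp
  have D: "Dst N i i' (int j' - int j) = nat d + (if i = i' then (if nat d = 1 then 2 else 0) else (if nat d = 0 then 2 else 0))"
    by (simp add: Dst_def d_def)
  show ?thesis unfolding graph_dist_def W
  proof (rule Least_equality)
    show "(if i = i' then Dst N i i' (int j' - int j) \<noteq> 1 else Dst N i i' (int j' - int j) \<ge> 1) \<and>
      d \<le> int (Dst N i i' (int j' - int j)) \<and> even (int (Dst N i i' (int j' - int j)) - d)"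
      unfolding D by (rule dst_least(1)[OF d0])
  next
    fix y assume "(if i = i' then y \<noteq> 1 else y \<ge> 1) \<and> d \<le> int y \<and> even (int y - d)"
    then show "Dst N i i' (int j' - int j) \<le> y"
      unfolding D by (rule dst_least(2)[OF d0])
  qed
qed


lemma sum_shift_periodic:
  fixes f :: "int \<Rightarrow> 'a::ab_group_add"
  assumes per: "\<And>t. f (t mod int N) = f t"
  shows "(\<Sum>k<N. f (int k + a)) = (\<Sum>k<N. f (int k))"
proof -
  have nat_case: "(\<Sum>k<N. f (int k + int b)) = (\<Sum>k<N. f (int k))" for b
  proof (induction b)
    case 0 then show ?case by simp
  next
    case (Suc b)
    define g where "g k = f (int k + int b)" for k
    have "(\<Sum>k<N. f (int k + int (Suc b))) = (\<Sum>k<N. g (Suc k))" by (simp add: g_def add_ac)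
    also have "\<dots> = (\<Sum>k<N. g k)"
    proof -
      have "g 0 + (\<Sum>k<N. g (Suc k)) = (\<Sum>k<N. g k) + g N"
        using sum.lessThan_Suc_shift[of g N] sum.lessThan_Suc[of g N] by simp
      moreover have "g N = g 0" unfolding g_def by (metis per mod_add_self1 of_nat_0 add_0)
      ultimately show ?thesis by (simp add: add.commute)
    qed
    finally show ?case using Suc.IH by (simp add: g_def)
  qed
  have "(\<Sum>k<N. f (int k + a)) = (\<Sum>k<N. f (int k + int (nat (a mod int N))))"
  proof (rule sum.cong[OF refl])
    fix k assume "k \<in> {..<N}"
    show "f (int k + a) = f (int k + int (nat (a mod int N)))"
    proof (cases "N = 0")
      case True then show ?thesis using \<open>k \<in> {..<N}\<close> by simp
    next
      case False
      then have "int (nat (a mod int N)) = a mod int N" by simp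
      then show ?thesis by (metis per mod_add_right_eq)
    qed
  qed
  also have "\<dots> = (\<Sum>k<N. f (int k))" by (rule nat_case)
  finally show ?thesis .
qed


definition wv :: "nat \<Rightarrow> int \<Rightarrow> int \<Rightarrow> complex" where
  "wv m r t = cis (pi * of_int r * of_int t / real m)"

lemma wv_mult: "wv m r a * wv m r b = wv m r (a + b)"
  unfolding wv_def cis_mult by (simp add: algebra_simps add_divide_distrib)

lemma wv_0 [simp]: "wv m r 0 = 1"
  by (simp add: wv_def)

lemma Re_wv: "Re (wv m r t) = cos (pi * of_int r * of_int t / real m)"
  by (simp add: wv_def)

lemma wv_per:
  assumes "m > 0"
  shows "wv m r (t mod int (2*m)) = wv m r t"
proof -
  have t: "t = t mod int (2*m) + int (2*m) * (t div int (2*m))" by simp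
  have eq: "pi * of_int r * of_int t / real m
      = pi * of_int r * of_int (t mod int (2*m)) / real m + 2 * pi * of_int (r * (t div int (2*m)))"
    using assms by (subst t) (simp add: field_simps)
  have "wv m r t = wv m r (t mod int (2*m)) * cis (2 * pi * of_int (r * (t div int (2*m))))"
    unfolding wv_def eq by (simp only: cis_mult)
  also have "cis (2 * pi * of_int (r * (t div int (2*m)))) = 1"
    by (rule cis_multiple_2pi) simp
  finally show ?thesis by simp
qed

lemma circulant:
  fixes g :: "int \<Rightarrow> real"
  assumes "m > 0" and per: "\<And>t. g (t mod int (2*m)) = g t"
  shows "(\<Sum>j'<2*m. complex_of_real (g (int j' - j)) * wv m r (int j'))
       = (\<Sum>k<2*m. complex_of_real (g (int k)) * wv m r (int k)) * wv m r j"
proof -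
  define f where "f t = complex_of_real (g t) * wv m r t" for t
  have fper: "f (t mod int (2*m)) = f t" for t
    unfolding f_def using per wv_per[OF assms(1)] by simp
  have "(\<Sum>j'<2*m. complex_of_real (g (int j' - j)) * wv m r (int j'))
      = (\<Sum>j'<2*m. f (int j' + (- j)) * wv m r j)"
    unfolding f_def by (intro sum.cong refl) (simp add: wv_mult mult.assoc)
  also have "\<dots> = (\<Sum>j'<2*m. f (int j' + (- j))) * wv m r j"
    by (simp add: sum_distrib_right)
  also have "(\<Sum>j'<2*m. f (int j' + (- j))) = (\<Sum>k<2*m. f (int k))"
    by (rule sum_shift_periodic) (rule fper)
  finally show ?thesis by (simp add: f_def)
qed

lemma circulant_Re:
  fixes g :: "int \<Rightarrow> real"
  assumes "m > 0" and per: "\<And>t. g (t mod int (2*m)) = g t"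
    and hat: "(\<Sum>k<2*m. complex_of_real (g (int k)) * wv m r (int k)) = complex_of_real c"
  shows "(\<Sum>j'<2*m. g (int j' - j) * cos (pi * of_int r * of_int (int j') / real m))
       = c * cos (pi * of_int r * of_int j / real m)"
proof -
  have "Re (\<Sum>j'<2*m. complex_of_real (g (int j' - j)) * wv m r (int j'))
       = Re (complex_of_real c * wv m r j)"
    using circulant[where g=g, OF assms(1,2), of j r] hat by simp
  then show ?thesis by (simp add: Re_wv)
qed


definition Dk :: "nat \<Rightarrow> int \<Rightarrow> real" where
  "Dk m t = real (nat (ddi (2*m) t))"
definition K1 :: "nat \<Rightarrow> int \<Rightarrow> real" where
  "K1 m t = Dk m t + (if ddi (2*m) t = 0 then 2 else 0)"
definition K2 :: "nat \<Rightarrow> int \<Rightarrow> real" where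
  "K2 m t = (if ddi (2*m) t = 1 then 2 else 0) - (if ddi (2*m) t = 0 then 2 else 0)"

lemma ddi_per: "ddi N (t mod int N) = ddi N t"
  by (simp add: ddi_def)

lemma Dk_per: "Dk m (t mod int (2*m)) = Dk m t"
  and K1_per: "K1 m (t mod int (2*m)) = K1 m t"
  and K2_per: "K2 m (t mod int (2*m)) = K2 m t"
  by (simp_all add: Dk_def K1_def K2_def ddi_per del: of_nat_mult)

lemma ddi_neg: "ddi N (- t) = ddi N t"
  by (auto simp: ddi_def zmod_zminus1_eq_if)

lemma ddi_nat: "k < N \<Longrightarrow> ddi N (int k) = min (int k) (int N - int k)"
  by (simp add: ddi_def)

lemma sum_Dk0:
  "(\<Sum>k<2*m. Dk m (int k)) = (real m)^2"
proof -
  have "(\<Sum>k<2*m. Dk m (int k)) = (\<Sum>k\<in>{0..<m}. Dk m (int k)) + (\<Sum>k\<in>{m..<2*m}. Dk m (int k))"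
    using sum.atLeastLessThan_concat[of 0 m "2*m" "\<lambda>k. Dk m (int k)"] by (simp add: atLeast0LessThan)
  also have "(\<Sum>k\<in>{m..<2*m}. Dk m (int k)) = (\<Sum>i\<in>{0..<m}. Dk m (int (i + m)))"
    using sum.shift_bounds_nat_ivl[of "\<lambda>k. Dk m (int k)" 0 m m] by (simp add: mult_2)
  also have "(\<Sum>k\<in>{0..<m}. Dk m (int k)) + (\<Sum>i\<in>{0..<m}. Dk m (int (i + m)))
      = (\<Sum>i\<in>{0..<m}. real m)"
    unfolding sum.distrib[symmetric]
  proof (rule sum.cong[OF refl])
    fix i assume "i \<in> {0..<m}"
    then have "ddi (2*m) (int i) = int i" "ddi (2*m) (int (i+m)) = int m - int i"
      using ddi_nat[of i "2*m"] ddi_nat[of "i+m" "2*m"] by auto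
    then show "Dk m (int i) + Dk m (int (i + m)) = real m"
      using \<open>i \<in> {0..<m}\<close> by (simp add: Dk_def of_nat_diff)
  qed
  also have "\<dots> = (real m)^2" by (simp add: power2_eq_square)
  finally show ?thesis .
qed


lemma wv_pm1: "wv m r 1 + wv m r (-1) = complex_of_real (2 * cos (pi * of_int r / real m))"
  by (simp add: wv_def complex_eq_iff)

lemma wv_m1: "m > 0 \<Longrightarrow> wv m r (-1) = wv m r (int (2*m - 1))"
proof -
  assume "m > 0"
  have "(-1::int) mod int (2*m) = int (2*m-1)"
    using \<open>m > 0\<close> by (simp add: zmod_minus1 of_nat_diff)
  then show ?thesis using wv_per[OF \<open>m > 0\<close>, of r "-1"] by simp
qed

lemma hat_K2:
  assumes "m \<ge> 2"
  shows "(\<Sum>k<2*m. complex_of_real (K2 m (int k)) * wv m r (int k))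
       = complex_of_real (4 * cos (pi * of_int r / real m) - 2)"
proof -
  have K: "complex_of_real (K2 m (int k)) * wv m r (int k)
     = (if k = 1 then 2 * wv m r 1 else 0) + (if k = 2*m-1 then 2 * wv m r (int (2*m-1)) else 0)
       - (if k = 0 then 2 else 0)" if "k < 2*m" for k
  proof -
    have d: "ddi (2*m) (int k) = min (int k) (2 * int m - int k)" using ddi_nat[OF that] by simp
    show ?thesis using that assms unfolding K2_def d by (auto simp: of_nat_diff)
  qed
  have "(\<Sum>k<2*m. complex_of_real (K2 m (int k)) * wv m r (int k))
     = (\<Sum>k<2*m. (if k = 1 then 2 * wv m r 1 else 0) + (if k = 2*m-1 then 2 * wv m r (int (2*m-1)) else 0)
       - (if k = 0 then 2 else 0))"
    by (rule sum.cong[OF refl]) (simp add: K)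
  also have "\<dots> = 2 * wv m r 1 + 2 * wv m r (int (2*m-1)) - 2"
    using assms by (simp add: sum.distrib sum_subtractf)
  also have "\<dots> = 2 * (wv m r 1 + wv m r (-1)) - 2"
    using wv_m1[of m r] assms by (simp add: algebra_simps)
  also have "\<dots> = complex_of_real (4 * cos (pi * of_int r / real m) - 2)"
    unfolding wv_pm1 by simp
  finally show ?thesis .
qed


definition Fv :: "nat \<Rightarrow> nat \<Rightarrow> real" where
  "Fv m r = (if r = 0 then (real m)^2 else if even r then 0
             else - 1 / (sin (pi * real r / (2 * real m)))^2)"

lemma ddi_small: "0 \<le> s \<Longrightarrow> s < int N \<Longrightarrow> ddi N s = min s (int N - s)"
  by (simp add: ddi_def)

lemma second_diff:
  assumes "m > 0" "k < 2*m"
  shows "Dk m (int k - 1) + Dk m (int k + 1)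
       = 2 * Dk m (int k) + (if k = 0 then 2 else 0) - (if k = m then 2 else 0)"
proof -
  define N where "N = 2*m"
  have k: "ddi N (int k) = min (int k) (int N - int k)" using ddi_small[of "int k" N] assms N_def by simp
  have a: "ddi N (int k - 1) = (if k = 0 then 1 else min (int k - 1) (int N - int k + 1))"
  proof (cases "k = 0")
    case True
    have "(-1::int) mod int N = int N - 1" using assms N_def by (simp add: zmod_minus1)
    then show ?thesis using True assms N_def by (simp add: ddi_def)
  next
    case False then show ?thesis using ddi_small[of "int k - 1" N] assms N_def by simp
  qed
  have b: "ddi N (int k + 1) = (if k + 1 = N then 0 else min (int k + 1) (int N - int k - 1))"
  proof (cases "k + 1 = N")
    case True
    then have "int k + 1 = int N" by simp
    then have "ddi N (int k + 1) = ddi N (int N)" by simp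
    also have "\<dots> = 0" by (simp add: ddi_def)
    finally show ?thesis using True by simp
  next
    case False then show ?thesis using ddi_small[of "int k + 1" N] assms N_def by simp
  qed
  have "ddi N (int k - 1) + ddi N (int k + 1) = 2 * ddi N (int k) + (if k = 0 then 2 else 0) - (if k = m then 2 else 0)"
    unfolding a b k using assms N_def by (auto simp: min_def)
  moreover have "ddi N (int k - 1) \<ge> 0" "ddi N (int k + 1) \<ge> 0" "ddi N (int k) \<ge> 0"
    using ddi_range[of N] assms N_def by auto
  ultimately have "real (nat (ddi N (int k - 1))) + real (nat (ddi N (int k + 1)))
     = 2 * real (nat (ddi N (int k))) + (if k = 0 then 2 else 0) - (if k = m then 2 else 0)"
    by (auto simp: of_nat_nat)
  then show ?thesis by (simp add: Dk_def N_def)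
qed


lemma wv_m: "wv m (int r) (int m) = (-1)^r" if "m > 0"
proof -
  have "wv m (int r) (int m) = cis (real r * pi)" using that by (simp add: wv_def mult.commute)
  also have "\<dots> = (cis pi)^r" by (simp only: DeMoivre)
  finally show ?thesis by simp
qed

lemma wv_minus1: "wv m r (a - 1) = wv m r (-1) * wv m r a"
  by (simp add: wv_mult)

lemma hat_D:
  assumes "m > 0" "r < 2*m"
  shows "(\<Sum>k<2*m. complex_of_real (Dk m (int k)) * wv m (int r) (int k)) = complex_of_real (Fv m r)"
proof (cases "r = 0")
  case True
  have "(\<Sum>k<2*m. complex_of_real (Dk m (int k)) * wv m (int r) (int k))
      = complex_of_real (\<Sum>k<2*m. Dk m (int k))" using True by (simp add: wv_def)
  then show ?thesis using True sum_Dk0[of m] by (simp add: Fv_def)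
next
  case False
  define S where "S = (\<Sum>k<2*m. complex_of_real (Dk m (int k)) * wv m (int r) (int k))"
  define w where "w = wv m (int r)"
  have wper: "w (t mod int (2*m)) = w t" for t using wv_per[OF assms(1)] by (simp add: w_def)
  have A: "w 1 * S = (\<Sum>k<2*m. complex_of_real (Dk m (int k - 1)) * w (int k))"
  proof -
    define f where "f t = complex_of_real (Dk m (t - 1)) * w t" for t
    have fper: "f (t mod int (2*m)) = f t" for t
    proof -
      have "Dk m (t mod int (2*m) - 1) = Dk m (t - 1)"
        by (metis Dk_per mod_diff_left_eq)
      then show ?thesis unfolding f_def using wper by simp
    qed
    have "w 1 * S = (\<Sum>k<2*m. f (int k + 1))"
      unfolding S_def f_def w_def sum_distrib_left
      by (intro sum.cong refl) (simp add: wv_mult[symmetric] algebra_simps)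
    also have "\<dots> = (\<Sum>k<2*m. f (int k))" by (rule sum_shift_periodic) (rule fper)
    finally show ?thesis by (simp add: f_def)
  qed
  have B: "w (-1) * S = (\<Sum>k<2*m. complex_of_real (Dk m (int k + 1)) * w (int k))"
  proof -
    define f where "f t = complex_of_real (Dk m (t + 1)) * w t" for t
    have fper: "f (t mod int (2*m)) = f t" for t
    proof -
      have "Dk m (t mod int (2*m) + 1) = Dk m (t + 1)"
        by (metis Dk_per mod_add_left_eq)
      then show ?thesis unfolding f_def using wper by simp
    qed
    have "w (-1) * S = (\<Sum>k<2*m. f (int k + (-1)))"
      unfolding S_def f_def w_def sum_distrib_left
      by (intro sum.cong refl) (simp add: wv_minus1)
    also have "\<dots> = (\<Sum>k<2*m. f (int k))" by (rule sum_shift_periodic) (rule fper)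
    finally show ?thesis by (simp add: f_def)
  qed
  have "(w 1 + w (-1)) * S = (\<Sum>k<2*m. complex_of_real (Dk m (int k - 1) + Dk m (int k + 1)) * w (int k))"
    unfolding distrib_right A B sum.distrib[symmetric] by (simp add: algebra_simps)
  also have "\<dots> = (\<Sum>k<2*m. 2 * (complex_of_real (Dk m (int k)) * w (int k))
       + (if k = 0 then 2 * w (int k) else 0) - (if k = m then 2 * w (int k) else 0))"
  proof (intro sum.cong refl)
    fix k assume "k \<in> {..<2*m}"
    then have sd: "Dk m (int k - 1) + Dk m (int k + 1)
       = 2 * Dk m (int k) + (if k = 0 then 2 else 0) - (if k = m then 2 else 0)"
      using second_diff[OF assms(1)] by simp
    show "complex_of_real (Dk m (int k - 1) + Dk m (int k + 1)) * w (int k) =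
         2 * (complex_of_real (Dk m (int k)) * w (int k)) + (if k = 0 then 2 * w (int k) else 0) -
         (if k = m then 2 * w (int k) else 0)"
      unfolding sd using assms(1) by (auto simp: algebra_simps)
  qed
  also have "\<dots> = 2 * S + 2 - 2 * (-1)^r"
    using assms wv_m[OF assms(1), of r]
    by (simp add: sum.distrib sum_subtractf S_def w_def sum_distrib_left)
  finally have eq: "(w 1 + w (-1)) * S = 2 * S + 2 - 2 * (-1)^r" .
  define th where "th = pi * real r / (2 * real m)"
  have "w 1 + w (-1) = complex_of_real (2 * cos (2 * th))"
    unfolding w_def wv_pm1 th_def using assms by simp
  also have "2 * cos (2 * th) = 2 - 4 * (sin th)^2" by (simp add: cos_double_sin)
  finally have hw: "w 1 + w (-1) = 2 - complex_of_real (4 * (sin th)^2)" by simp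
  have lin: "(2 - c) * S = 2 * S + b \<Longrightarrow> - (c * S) = (b::complex)" for c b S
    by algebra
  have "complex_of_real (- 4 * (sin th)^2) * S = 2 - 2 * (-1)^r"
    using lin[of "complex_of_real (4 * (sin th)^2)" S "2 - 2 * (-1)^r"] eq unfolding hw
    by (simp add: algebra_simps)
  moreover have "sin th > 0" unfolding th_def
    using assms False by (intro sin_gt_zero) (auto simp: field_simps)
  ultimately have "S = (2 - 2 * (-1)^r) / complex_of_real (- 4 * (sin th)^2)"
    by (simp add: field_simps)
  then show ?thesis using False unfolding S_def[symmetric] Fv_def th_def[symmetric]
    by (auto simp: field_simps)
qed


lemma hat_K1:
  assumes "m > 0" "r < 2*m"
  shows "(\<Sum>k<2*m. complex_of_real (K1 m (int k)) * wv m (int r) (int k)) = complex_of_real (Fv m r + 2)"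
proof -
  have "(\<Sum>k<2*m. complex_of_real (K1 m (int k)) * wv m (int r) (int k))
     = (\<Sum>k<2*m. complex_of_real (Dk m (int k)) * wv m (int r) (int k) + (if k = 0 then 2 else 0))"
  proof (intro sum.cong refl)
    fix k assume "k \<in> {..<2*m}"
    then have "ddi (2*m) (int k) = 0 \<longleftrightarrow> k = 0" using ddi_nat[of k "2*m"] by auto
    then show "complex_of_real (K1 m (int k)) * wv m (int r) (int k) =
         complex_of_real (Dk m (int k)) * wv m (int r) (int k) + (if k = 0 then 2 else 0)"
      by (auto simp: K1_def algebra_simps)
  qed
  also have "\<dots> = complex_of_real (Fv m r) + 2"
    using assms by (simp add: sum.distrib hat_D)
  finally show ?thesis by simp
qed

lemma inversion:
  assumes "m > 0" "\<bar>d\<bar> < int (2*m)"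
  shows "(\<Sum>r<2*m. wv m (int r) d) = (if d = 0 then of_nat (2*m) else 0)"
proof (cases "d = 0")
  case True then show ?thesis by simp
next
  case False
  define z where "z = cis (pi * of_int d / real m)"
  have wz: "wv m (int r) d = z ^ r" for r
    unfolding z_def wv_def DeMoivre by (simp add: field_simps)
  have zN: "z ^ (2*m) = 1"
  proof -
    have "z ^ (2*m) = cis (2 * pi * of_int d)" unfolding z_def DeMoivre using assms by (simp add: field_simps)
    also have "\<dots> = 1" by (rule cis_multiple_2pi) simp
    finally show ?thesis .
  qed
  have z1: "z \<noteq> 1"
  proof
    assume "z = 1"
    then have "Re (cis (pi * of_int d / real m)) = 1" unfolding z_def by simp
    then have "cos (pi * of_int d / real m) = 1" by simp
    then obtain k :: int where k: "pi * of_int d / real m = of_int k * 2 * pi" by (auto simp: cos_one_2pi_int)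
    then have "real_of_int d = of_int (k * 2 * int m)" using assms by (simp add: field_simps)
    then have dk: "d = k * 2 * int m" by linarith
    show False
    proof (cases "k = 0")
      case True then show False using dk False by simp
    next
      case False
      then have "\<bar>k\<bar> \<ge> 1" by simp
      then have "\<bar>k\<bar> * (2 * int m) \<ge> 1 * (2 * int m)" by (intro mult_right_mono) auto
      then show False using dk assms by (simp add: abs_mult)
    qed
  qed
  have "(\<Sum>r<2*m. wv m (int r) d) = (\<Sum>r<2*m. z ^ r)" by (simp add: wz)
  also have "\<dots> = (z ^ (2*m) - 1) / (z - 1)" using z1 by (rule geometric_sum)
  also have "\<dots> = 0" using zN by simp
  finally show ?thesis using False by simp
qed


lemma Dst_K:
  assumes "m > 0"
  shows "real (Dst (2*m) i i' t) = K1 m t + (if i = i' then K2 m t else 0)"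
proof -
  have "ddi (2*m) t \<ge> 0" using ddi_range[of "2*m" t] assms by simp
  then show ?thesis unfolding Dst_def K1_def K2_def Dk_def Let_def
    by (auto simp: of_nat_nat)
qed

lemma eig_sum:
  assumes "n \<ge> 3" "m > 0" "i < n" "j < 2*m"
  shows "(\<Sum>v\<in>{..<n} \<times> {..<2*m}. real (graph_dist (kron_adj (complete_adj n) (cycle_adj (2*m))) (i,j) v) * x v)
    = (\<Sum>i'<n. \<Sum>j'<2*m. K1 m (int j' - int j) * x (i',j')) + (\<Sum>j'<2*m. K2 m (int j' - int j) * x (i,j'))"
proof -
  have "(\<Sum>v\<in>{..<n} \<times> {..<2*m}. real (graph_dist (kron_adj (complete_adj n) (cycle_adj (2*m))) (i,j) v) * x v)
     = (\<Sum>i'<n. \<Sum>j'<2*m. real (graph_dist (kron_adj (complete_adj n) (cycle_adj (2*m))) (i,j) (i',j')) * x (i',j'))"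
    by (simp add: sum.cartesian_product)
  also have "\<dots> = (\<Sum>i'<n. \<Sum>j'<2*m. K1 m (int j' - int j) * x (i',j')
        + (if i = i' then K2 m (int j' - int j) * x (i',j') else 0))"
  proof (intro sum.cong refl)
    fix i' j' assume "i' \<in> {..<n}" "j' \<in> {..<2*m}"
    then show "real (graph_dist (kron_adj (complete_adj n) (cycle_adj (2*m))) (i,j) (i',j')) * x (i',j')
       = K1 m (int j' - int j) * x (i',j') + (if i = i' then K2 m (int j' - int j) * x (i',j') else 0)"
    proof -
      have gd: "graph_dist (kron_adj (complete_adj n) (cycle_adj (2*m))) (i,j) (i',j') = Dst (2*m) i i' (int j' - int j)"
        using graph_dist_kron[of n "2*m" i i' j j'] assms \<open>i' \<in> {..<n}\<close> \<open>j' \<in> {..<2*m}\<close> by simp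
      show ?thesis unfolding gd Dst_K[OF assms(2)] by (cases "i = i'") (simp_all add: algebra_simps)
    qed
  qed
  also have "\<dots> = (\<Sum>i'<n. \<Sum>j'<2*m. K1 m (int j' - int j) * x (i',j'))
       + (\<Sum>i'<n. if i = i' then (\<Sum>j'<2*m. K2 m (int j' - int j) * x (i',j')) else 0)"
  proof -
    have "(\<Sum>j'<2*m. (if i = i' then K2 m (int j' - int j) * x (i',j') else 0))
        = (if i = i' then (\<Sum>j'<2*m. K2 m (int j' - int j) * x (i',j')) else 0)" for i'
      by (cases "i = i'") simp_all
    then show ?thesis by (simp only: sum.distrib)
  qed
  also have "(\<Sum>i'<n. if i = i' then (\<Sum>j'<2*m. K2 m (int j' - int j) * x (i',j')) else 0)
      = (\<Sum>j'<2*m. K2 m (int j' - int j) * x (i,j'))"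
    using assms(3) by simp
  finally show ?thesis .
qed


lemma K1_sym: "K1 m (- t) = K1 m t" and K2_sym: "K2 m (- t) = K2 m t"
  by (simp_all add: K1_def K2_def Dk_def ddi_neg)

lemma circ_sym:
  fixes g :: "int \<Rightarrow> real"
  assumes "m > 0" and per: "\<And>t. g (t mod int (2*m)) = g t" and sym: "\<And>t. g (- t) = g t"
  shows "(\<Sum>j<2*m. complex_of_real (g (int j' - int j)) * wv m r (int j))
       = (\<Sum>k<2*m. complex_of_real (g (int k)) * wv m r (int k)) * wv m r (int j')"
proof -
  have "(\<Sum>j<2*m. complex_of_real (g (int j' - int j)) * wv m r (int j))
      = (\<Sum>j<2*m. complex_of_real (g (int j - int j')) * wv m r (int j))"
    by (intro sum.cong refl) (metis minus_diff_eq sym)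
  also have "\<dots> = (\<Sum>k<2*m. complex_of_real (g (int k)) * wv m r (int k)) * wv m r (int j')"
    by (rule circulant[where g=g, OF assms(1) per])
  finally show ?thesis .
qed

definition cvec :: "nat \<Rightarrow> nat \<Rightarrow> nat \<Rightarrow> real" where
  "cvec m r j = cos (pi * real r * real j / real m)"

lemma circ_cos:
  fixes g :: "int \<Rightarrow> real"
  assumes "m > 0" and per: "\<And>t. g (t mod int (2*m)) = g t"
    and hat: "(\<Sum>k<2*m. complex_of_real (g (int k)) * wv m (int r) (int k)) = complex_of_real c"
  shows "(\<Sum>j'<2*m. g (int j' - int j) * cvec m r j') = c * cvec m r j"
  using circulant_Re[where g=g, OF assms(1) per hat, of "int j"] by (simp add: cvec_def)

lemma eig_A:
  assumes "n \<ge> 3" "m \<ge> 2" "r < 2*m"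
  shows "distance_eigenvalue ({..<n} \<times> {..<2*m}) (kron_adj (complete_adj n) (cycle_adj (2*m)))
          (4 * cos (pi * real r / real m) - 2)"
proof -
  have m: "m > 0" using assms by simp
  define u where "u i = (if i = 0 then 1 else 0) - (if i = (1::nat) then 1 else (0::real))" for i
  define x where "x = (\<lambda>(i,j). u i * cvec m r j)"
  have su: "(\<Sum>i<n. u i) = 0" using assms by (simp add: u_def sum_subtractf)
  have h2: "(\<Sum>j'<2*m. K2 m (int j' - int j) * cvec m r j') = (4 * cos (pi * real r / real m) - 2) * cvec m r j" for j
    using circ_cos[where g="K2 m", OF m K2_per hat_K2[OF assms(2)]] by simp
  show ?thesis unfolding distance_eigenvalue_def
  proof (intro exI[of _ x] conjI ballI)
    show "\<exists>v\<in>{..<n} \<times> {..<2*m}. x v \<noteq> 0"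
      using assms by (intro bexI[of _ "(0,0)"]) (auto simp: x_def u_def cvec_def)
  next
    fix v assume v: "v \<in> {..<n} \<times> {..<2*m}"
    obtain i j where ij: "v = (i,j)" "i < n" "j < 2*m" using v by auto
    have "(\<Sum>i'<n. \<Sum>j'<2*m. K1 m (int j' - int j) * x (i',j'))
        = (\<Sum>i'<n. u i' * (\<Sum>j'<2*m. K1 m (int j' - int j) * cvec m r j'))"
      by (simp add: x_def sum_distrib_left algebra_simps)
    also have "\<dots> = 0" using su by (simp add: sum_distrib_right[symmetric])
    finally have 1: "(\<Sum>i'<n. \<Sum>j'<2*m. K1 m (int j' - int j) * x (i',j')) = 0" .
    have 2: "(\<Sum>j'<2*m. K2 m (int j' - int j) * x (i,j')) = u i * (\<Sum>j'<2*m. K2 m (int j' - int j) * cvec m r j')"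
      by (simp add: x_def sum_distrib_left algebra_simps)
    show "(\<Sum>w\<in>{..<n} \<times> {..<2*m}. real (graph_dist (kron_adj (complete_adj n) (cycle_adj (2*m))) v w) * x w)
       = (4 * cos (pi * real r / real m) - 2) * x v"
      unfolding ij(1) eig_sum[OF assms(1) m ij(2,3)] 1 2 h2 by (simp add: x_def)
  qed
qed

lemma eig_B:
  assumes "n \<ge> 3" "m \<ge> 2" "r < 2*m"
  shows "distance_eigenvalue ({..<n} \<times> {..<2*m}) (kron_adj (complete_adj n) (cycle_adj (2*m)))
          (real n * (Fv m r + 2) + 4 * cos (pi * real r / real m) - 2)"
proof -
  have m: "m > 0" using assms by simp
  define x where "x = (\<lambda>(i::nat,j). cvec m r j)"
  have h2: "(\<Sum>j'<2*m. K2 m (int j' - int j) * cvec m r j') = (4 * cos (pi * real r / real m) - 2) * cvec m r j" for j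
    using circ_cos[where g="K2 m", OF m K2_per hat_K2[OF assms(2)]] by simp
  have h1: "(\<Sum>j'<2*m. K1 m (int j' - int j) * cvec m r j') = (Fv m r + 2) * cvec m r j" for j
    using circ_cos[where g="K1 m", OF m K1_per hat_K1[OF m assms(3)]] by simp
  show ?thesis unfolding distance_eigenvalue_def
  proof (intro exI[of _ x] conjI ballI)
    show "\<exists>v\<in>{..<n} \<times> {..<2*m}. x v \<noteq> 0"
      using assms by (intro bexI[of _ "(0,0)"]) (auto simp: x_def cvec_def)
  next
    fix v assume v: "v \<in> {..<n} \<times> {..<2*m}"
    obtain i j where ij: "v = (i,j)" "i < n" "j < 2*m" using v by auto
    show "(\<Sum>w\<in>{..<n} \<times> {..<2*m}. real (graph_dist (kron_adj (complete_adj n) (cycle_adj (2*m))) v w) * x w)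
       = (real n * (Fv m r + 2) + 4 * cos (pi * real r / real m) - 2) * x v"
    proof -
      have a: "(\<Sum>i'<n. \<Sum>j'<2*m. K1 m (int j' - int j) * x (i',j')) = real n * ((Fv m r + 2) * cvec m r j)"
        by (simp add: x_def h1)
      have b: "(\<Sum>j'<2*m. K2 m (int j' - int j) * x (i,j')) = (4 * cos (pi * real r / real m) - 2) * cvec m r j"
        by (simp add: x_def h2)
      show ?thesis unfolding ij(1) eig_sum[OF assms(1) m ij(2,3)] a b by (simp add: x_def algebra_simps)
    qed
  qed
qed


lemma eig_conv:
  assumes "n \<ge> 3" "m \<ge> 2"
    and ev: "distance_eigenvalue ({..<n} \<times> {..<2*m}) (kron_adj (complete_adj n) (cycle_adj (2*m))) \<mu>"
  shows "\<exists>r<2*m. \<mu> = 4 * cos (pi * real r / real m) - 2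
                \<or> \<mu> = real n * (Fv m r + 2) + 4 * cos (pi * real r / real m) - 2"
proof -
  have m: "m > 0" using assms by simp
  obtain x where nz: "\<exists>v\<in>{..<n} \<times> {..<2*m}. x v \<noteq> 0"
    and eq0: "\<And>v. v \<in> {..<n} \<times> {..<2*m} \<Longrightarrow>
       (\<Sum>w\<in>{..<n} \<times> {..<2*m}. real (graph_dist (kron_adj (complete_adj n) (cycle_adj (2*m))) v w) * x w) = \<mu> * x v"
    using ev unfolding distance_eigenvalue_def by blast
  have eq: "(\<Sum>i'<n. \<Sum>j'<2*m. K1 m (int j' - int j) * x (i',j')) + (\<Sum>j'<2*m. K2 m (int j' - int j) * x (i,j'))
       = \<mu> * x (i,j)" if "i < n" "j < 2*m" for i j
    using eq0[of "(i,j)"] that eig_sum[OF assms(1) m that] by simp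
  obtain i0 j0 where ij0: "i0 < n" "j0 < 2*m" "x (i0,j0) \<noteq> 0" using nz by auto
  define X where "X r i = (\<Sum>j<2*m. complex_of_real (x (i,j)) * wv m (int r) (int j))" for r i
  have "\<exists>r<2*m. X r i0 \<noteq> 0"
  proof (rule ccontr)
    assume "\<not> ?thesis"
    then have 0: "(\<Sum>r<2*m. X r i0 * wv m (int r) (- int j0)) = 0" by simp
    have "(\<Sum>r<2*m. X r i0 * wv m (int r) (- int j0))
        = (\<Sum>j<2*m. complex_of_real (x (i0,j)) * (\<Sum>r<2*m. wv m (int r) (int j - int j0)))"
      unfolding X_def sum_distrib_right sum_distrib_left
      by (subst sum.swap) (simp add: wv_mult mult.assoc)
    also have "\<dots> = (\<Sum>j<2*m. if j = j0 then complex_of_real (x (i0,j)) * of_nat (2*m) else 0)"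
    proof (intro sum.cong refl)
      fix j assume "j \<in> {..<2*m}"
      then have "\<bar>int j - int j0\<bar> < int (2*m)" using ij0 by auto
      then show "complex_of_real (x (i0,j)) * (\<Sum>r<2*m. wv m (int r) (int j - int j0))
          = (if j = j0 then complex_of_real (x (i0,j)) * of_nat (2*m) else 0)"
        using inversion[OF m] by auto
    qed
    also have "\<dots> = complex_of_real (x (i0,j0)) * of_nat (2*m)" using ij0 by simp
    finally show False using 0 ij0 m by simp
  qed
  then obtain r where r: "r < 2*m" "X r i0 \<noteq> 0" by blast
  define a where "a = Fv m r + 2"
  define b where "b = 4 * cos (pi * real r / real m) - 2"
  have hat1: "(\<Sum>k<2*m. complex_of_real (K1 m (int k)) * wv m (int r) (int k)) = complex_of_real a"
    unfolding a_def by (rule hat_K1[OF m r(1)])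
  have hat2: "(\<Sum>k<2*m. complex_of_real (K2 m (int k)) * wv m (int r) (int k)) = complex_of_real b"
    unfolding b_def using hat_K2[OF assms(2), of "int r"] by simp
  define Y where "Y = (\<Sum>i<n. X r i)"
  have key: "complex_of_real a * Y + complex_of_real b * X r i = complex_of_real \<mu> * X r i" if "i < n" for i
  proof -
    have "(\<Sum>j<2*m. complex_of_real ((\<Sum>i'<n. \<Sum>j'<2*m. K1 m (int j' - int j) * x (i',j'))
          + (\<Sum>j'<2*m. K2 m (int j' - int j) * x (i,j'))) * wv m (int r) (int j))
        = (\<Sum>j<2*m. complex_of_real (\<mu> * x (i,j)) * wv m (int r) (int j))"
      using eq[OF that] by simp
    also have "\<dots> = complex_of_real \<mu> * X r i"
      unfolding X_def by (simp add: sum_distrib_left mult.assoc)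
    finally have E: "(\<Sum>j<2*m. complex_of_real ((\<Sum>i'<n. \<Sum>j'<2*m. K1 m (int j' - int j) * x (i',j'))
          + (\<Sum>j'<2*m. K2 m (int j' - int j) * x (i,j'))) * wv m (int r) (int j)) = complex_of_real \<mu> * X r i" .
    have T1: "(\<Sum>j<2*m. complex_of_real (\<Sum>i'<n. \<Sum>j'<2*m. K1 m (int j' - int j) * x (i',j')) * wv m (int r) (int j))
        = complex_of_real a * Y"
    proof -
      have "(\<Sum>j<2*m. complex_of_real (\<Sum>i'<n. \<Sum>j'<2*m. K1 m (int j' - int j) * x (i',j')) * wv m (int r) (int j))
          = (\<Sum>i'<n. \<Sum>j'<2*m. complex_of_real (x (i',j')) *
               (\<Sum>j<2*m. complex_of_real (K1 m (int j' - int j)) * wv m (int r) (int j)))"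
      proof -
        define F where "F j i' j' = complex_of_real (K1 m (int j' - int j)) * complex_of_real (x (i',j')) * wv m (int r) (int j)" for j i' j'
        have "(\<Sum>j<2*m. complex_of_real (\<Sum>i'<n. \<Sum>j'<2*m. K1 m (int j' - int j) * x (i',j')) * wv m (int r) (int j))
           = (\<Sum>j<2*m. \<Sum>i'<n. \<Sum>j'<2*m. F j i' j')"
          unfolding F_def of_real_sum sum_distrib_right by simp
        also have "\<dots> = (\<Sum>i'<n. \<Sum>j<2*m. \<Sum>j'<2*m. F j i' j')" by (rule sum.swap)
        also have "\<dots> = (\<Sum>i'<n. \<Sum>j'<2*m. \<Sum>j<2*m. F j i' j')"
          by (rule sum.cong[OF refl], rule sum.swap)
        also have "\<dots> = (\<Sum>i'<n. \<Sum>j'<2*m. complex_of_real (x (i',j')) *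
               (\<Sum>j<2*m. complex_of_real (K1 m (int j' - int j)) * wv m (int r) (int j)))"
          unfolding F_def sum_distrib_left by (simp add: algebra_simps)
        finally show ?thesis .
      qed
      also have "\<dots> = (\<Sum>i'<n. \<Sum>j'<2*m. complex_of_real (x (i',j')) * (complex_of_real a * wv m (int r) (int j')))"
        using circ_sym[where g="K1 m", OF m K1_per K1_sym, of _ "int r"] hat1 by simp
      also have "\<dots> = complex_of_real a * Y"
        unfolding Y_def X_def by (simp add: sum_distrib_left algebra_simps)
      finally show ?thesis .
    qed
    have T2: "(\<Sum>j<2*m. complex_of_real (\<Sum>j'<2*m. K2 m (int j' - int j) * x (i,j')) * wv m (int r) (int j))
        = complex_of_real b * X r i"
    proof -
      have "(\<Sum>j<2*m. complex_of_real (\<Sum>j'<2*m. K2 m (int j' - int j) * x (i,j')) * wv m (int r) (int j))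
          = (\<Sum>j'<2*m. complex_of_real (x (i,j')) *
               (\<Sum>j<2*m. complex_of_real (K2 m (int j' - int j)) * wv m (int r) (int j)))"
      proof -
        define F where "F j j' = complex_of_real (K2 m (int j' - int j)) * complex_of_real (x (i,j')) * wv m (int r) (int j)" for j j'
        have "(\<Sum>j<2*m. complex_of_real (\<Sum>j'<2*m. K2 m (int j' - int j) * x (i,j')) * wv m (int r) (int j))
           = (\<Sum>j<2*m. \<Sum>j'<2*m. F j j')"
          unfolding F_def of_real_sum sum_distrib_right by simp
        also have "\<dots> = (\<Sum>j'<2*m. \<Sum>j<2*m. F j j')" by (rule sum.swap)
        also have "\<dots> = (\<Sum>j'<2*m. complex_of_real (x (i,j')) *
               (\<Sum>j<2*m. complex_of_real (K2 m (int j' - int j)) * wv m (int r) (int j)))"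
          unfolding F_def sum_distrib_left by (simp add: algebra_simps)
        finally show ?thesis .
      qed
      also have "\<dots> = (\<Sum>j'<2*m. complex_of_real (x (i,j')) * (complex_of_real b * wv m (int r) (int j')))"
        using circ_sym[where g="K2 m", OF m K2_per K2_sym, of _ "int r"] hat2 by simp
      also have "\<dots> = complex_of_real b * X r i"
        unfolding X_def by (simp add: sum_distrib_left algebra_simps)
      finally show ?thesis .
    qed
    show ?thesis using E T1 T2 by (simp add: distrib_right sum.distrib)
  qed
  show ?thesis
  proof (cases "\<mu> = b")
    case True then show ?thesis using r unfolding b_def by blast
  next
    case False
    then have nb: "complex_of_real \<mu> - complex_of_real b \<noteq> 0" by simp
    have k2: "(complex_of_real \<mu> - complex_of_real b) * X r i = complex_of_real a * Y" if "i < n" for i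
      using key[OF that] by (simp add: algebra_simps)
    have "(complex_of_real \<mu> - complex_of_real b) * Y = (\<Sum>i<n. (complex_of_real \<mu> - complex_of_real b) * X r i)"
      unfolding Y_def by (simp add: sum_distrib_left)
    also have "\<dots> = (\<Sum>i<n. complex_of_real a * Y)"
      using k2 by simp
    also have "\<dots> = of_nat n * complex_of_real a * Y" by simp
    finally have S: "(complex_of_real \<mu> - complex_of_real b) * Y = of_nat n * complex_of_real a * Y" .
    have "Y \<noteq> 0"
    proof
      assume "Y = 0"
      then have "(complex_of_real \<mu> - complex_of_real b) * X r i0 = 0" using k2[OF ij0(1)] by simp
      then show False using nb r(2) by simp
    qed
    then have "complex_of_real \<mu> - complex_of_real b = of_nat n * complex_of_real a" using S by simp
    then have "\<mu> = real n * a + b"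
      by (metis add_diff_cancel_right' diff_add_cancel of_real_add of_real_eq_iff of_real_mult of_real_of_nat_eq)
    then show ?thesis using r unfolding a_def b_def by (intro exI[of _ r]) auto
  qed
qed


lemma eig_set:
  assumes "n \<ge> 3" "m \<ge> 2"
  shows "{\<mu>. distance_eigenvalue ({..<n} \<times> {..<2*m}) (kron_adj (complete_adj n) (cycle_adj (2*m))) \<mu>}
    = {\<mu>. \<exists>r<2*m. \<mu> = 4 * cos (pi * real r / real m) - 2
                \<or> \<mu> = real n * (Fv m r + 2) + 4 * cos (pi * real r / real m) - 2}"
proof (intro equalityI subsetI)
  fix \<mu> assume "\<mu> \<in> {\<mu>. distance_eigenvalue ({..<n} \<times> {..<2*m}) (kron_adj (complete_adj n) (cycle_adj (2*m))) \<mu>}"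
  then show "\<mu> \<in> {\<mu>. \<exists>r<2*m. \<mu> = 4 * cos (pi * real r / real m) - 2
                \<or> \<mu> = real n * (Fv m r + 2) + 4 * cos (pi * real r / real m) - 2}"
    using eig_conv[OF assms] by simp
next
  fix \<mu> assume "\<mu> \<in> {\<mu>. \<exists>r<2*m. \<mu> = 4 * cos (pi * real r / real m) - 2
                \<or> \<mu> = real n * (Fv m r + 2) + 4 * cos (pi * real r / real m) - 2}"
  then obtain r where "r < 2*m" "\<mu> = 4 * cos (pi * real r / real m) - 2
                \<or> \<mu> = real n * (Fv m r + 2) + 4 * cos (pi * real r / real m) - 2" by blast
  then show "\<mu> \<in> {\<mu>. distance_eigenvalue ({..<n} \<times> {..<2*m}) (kron_adj (complete_adj n) (cycle_adj (2*m))) \<mu>}"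
    using eig_A[OF assms] eig_B[OF assms] by auto
qed

lemma memA: "r < 2*m \<Longrightarrow> \<mu> = 4 * cos (pi * real r / real m) - 2 \<Longrightarrow>
   \<mu> \<in> {\<mu>. \<exists>r<2*m. \<mu> = 4 * cos (pi * real r / real m) - 2
                \<or> \<mu> = real n * (Fv m r + 2) + 4 * cos (pi * real r / real m) - 2}"
  by (rule CollectI, rule exI[of _ r]) simp

lemma memB: "r < 2*m \<Longrightarrow> \<mu> = real n * (Fv m r + 2) + 4 * cos (pi * real r / real m) - 2 \<Longrightarrow>
   \<mu> \<in> {\<mu>. \<exists>r<2*m. \<mu> = 4 * cos (pi * real r / real m) - 2
                \<or> \<mu> = real n * (Fv m r + 2) + 4 * cos (pi * real r / real m) - 2}"
  by (rule CollectI, rule exI[of _ r]) simp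

theorem theorem4p1:
  fixes n m :: nat
  assumes "n \<ge> 3" and "m \<ge> 2"
  shows "{\<mu>. distance_eigenvalue ({..<n} \<times> {..<2*m})
                 (kron_adj (complete_adj n) (cycle_adj (2*m))) \<mu>}
         = {2 * (real n + 1) + real n * (real m)^2}
           \<union> {2 * (real n - 1) + 4 * cos (2 * real p * pi / real m) | p. 1 \<le> p \<and> p \<le> m - 1}
           \<union> {2 * (real n - 1) + 4 * cos ((2 * real q - 1) * pi / real m)
                - real n * (1 / (sin ((2 * real q - 1) * pi / (2 * real m)))^2) | q. 1 \<le> q \<and> q \<le> m}
           \<union> {4 * cos (pi / real m * real r) - 2 | r. r \<le> 2 * m - 1}"
  (is "_ = ?R")
proof -
  have m: "m > 0" using assms by simp
  have "{\<mu>. \<exists>r<2*m. \<mu> = 4 * cos (pi * real r / real m) - 2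
                \<or> \<mu> = real n * (Fv m r + 2) + 4 * cos (pi * real r / real m) - 2} = ?R"
  proof (intro equalityI subsetI)
    fix \<mu> assume "\<mu> \<in> {\<mu>. \<exists>r<2*m. \<mu> = 4 * cos (pi * real r / real m) - 2
                \<or> \<mu> = real n * (Fv m r + 2) + 4 * cos (pi * real r / real m) - 2}"
    then obtain r where r: "r < 2*m" and "\<mu> = 4 * cos (pi * real r / real m) - 2
                \<or> \<mu> = real n * (Fv m r + 2) + 4 * cos (pi * real r / real m) - 2" by blast
    then consider (A) "\<mu> = 4 * cos (pi * real r / real m) - 2"
      | (B) "\<mu> = real n * (Fv m r + 2) + 4 * cos (pi * real r / real m) - 2" by blast
    then show "\<mu> \<in> ?R"
    proof cases
      case A
      have "pi * real r / real m = pi / real m * real r" by simp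
      then have h1: "\<mu> = 4 * cos (pi / real m * real r) - 2" using A by simp
      have h2: "r \<le> 2 * m - 1" using r by simp
      show ?thesis by (rule UnI2, intro CollectI exI[of _ r] conjI) (rule h1, rule h2)
    next
      case B
      show ?thesis
      proof (cases "r = 0")
        case True
        then have h: "\<mu> = 2 * (real n + 1) + real n * (real m)^2" using B by (simp add: Fv_def algebra_simps)
        show ?thesis by (rule UnI1, rule UnI1, rule UnI1) (simp add: h)
      next
        case False
        show ?thesis
        proof (cases "even r")
          case True
          then obtain p where p: "r = 2 * p" by blast
          have h1: "1 \<le> p \<and> p \<le> m - 1" using p r False by auto
          have h2: "\<mu> = 2 * (real n - 1) + 4 * cos (2 * real p * pi / real m)"
            using B p False by (simp add: Fv_def algebra_simps)
          show ?thesis by (rule UnI1, rule UnI1, rule UnI2, intro CollectI exI[of _ p] conjI) (rule h2, rule h1[THEN conjunct1], rule h1[THEN conjunct2])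
        next
          case odd: False
          then obtain k where k: "r = 2 * k + 1" by (rule oddE)
          define q where "q = k + 1"
          have q: "r = 2 * q - 1" "q \<ge> 1" using k by (simp_all add: q_def)
          then have rq: "real r = 2 * real q - 1" by (simp add: of_nat_diff)
          have h1: "1 \<le> q \<and> q \<le> m" using q r by auto
          have h2: "\<mu> = 2 * (real n - 1) + 4 * cos ((2 * real q - 1) * pi / real m)
                - real n * (1 / (sin ((2 * real q - 1) * pi / (2 * real m)))^2)"
            using B odd False unfolding Fv_def rq by (simp add: algebra_simps)
          show ?thesis by (rule UnI1, rule UnI2, intro CollectI exI[of _ q] conjI) (rule h2, rule h1[THEN conjunct1], rule h1[THEN conjunct2])
        qed
      qed
    qed
  next
    fix \<mu> assume H: "\<mu> \<in> ?R"
    consider (a) "\<mu> = 2 * (real n + 1) + real n * (real m)^2"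
      | (b) p where "1 \<le> p" "p \<le> m - 1" "\<mu> = 2 * (real n - 1) + 4 * cos (2 * real p * pi / real m)"
      | (c) q where "1 \<le> q" "q \<le> m" "\<mu> = 2 * (real n - 1) + 4 * cos ((2 * real q - 1) * pi / real m)
                - real n * (1 / (sin ((2 * real q - 1) * pi / (2 * real m)))^2)"
      | (d) r where "r \<le> 2 * m - 1" "\<mu> = 4 * cos (pi / real m * real r) - 2"
    proof -
      note H' = H[unfolded Un_iff mem_Collect_eq singleton_iff]
      show thesis
        apply (insert H')
        apply (elim disjE exE conjE)
        subgoal by (rule that(1))
        subgoal by (rule that(2)) assumption+
        subgoal by (rule that(3)) assumption+
        subgoal by (rule that(4)) assumption+
        done
    qed
    then show "\<mu> \<in> {\<mu>. \<exists>r<2*m. \<mu> = 4 * cos (pi * real r / real m) - 2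
                \<or> \<mu> = real n * (Fv m r + 2) + 4 * cos (pi * real r / real m) - 2}"
    proof cases
      case a
      then have "\<mu> = real n * (Fv m 0 + 2) + 4 * cos (pi * real 0 / real m) - 2"
        by (simp add: Fv_def algebra_simps)
      then show ?thesis using m by (intro memB[of 0]) simp_all
    next
      case (b p)
      then have "\<mu> = real n * (Fv m (2*p) + 2) + 4 * cos (pi * real (2*p) / real m) - 2"
        by (simp add: Fv_def algebra_simps)
      moreover have "2 * p < 2 * m" using b by auto
      ultimately show ?thesis by (intro memB[of "2*p"])
    next
      case (c q)
      have rq: "real (2*q - 1) = 2 * real q - 1" using c by (simp add: of_nat_diff)
      have odd: "odd (2*q - 1)" "2*q - 1 \<noteq> 0" using c by auto
      have "\<mu> = real n * (Fv m (2*q-1) + 2) + 4 * cos (pi * real (2*q-1) / real m) - 2"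
        using c odd unfolding Fv_def rq by (simp add: algebra_simps)
      moreover have "2 * q - 1 < 2 * m" using c by auto
      ultimately show ?thesis by (intro memB[of "2*q-1"])
    next
      case (d r)
      then have "\<mu> = 4 * cos (pi * real r / real m) - 2" by simp
      moreover have "r < 2 * m" using d m by auto
      ultimately show ?thesis by (intro memA[of r])
    qed
  qed
  then show ?thesis using eig_set[OF assms] by simp
qed


end
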